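(* Let $S=\{z\in\mathbb{C}: |\operatorname{Arg} z|\geq 3\pi/4\}$. For every $z\in S$ one has $\operatorname{Re}(\operatorname{erfc}(z))\geq 1$, where $\operatorname{erfc}(z)=\frac{2}{\sqrt{\pi}}\int_z^{\infty}e^{-u^2}\,du$. Moreover, equality $\operatorname{Re}(\operatorname{erfc}(z))=1$ holds for $z\in S$ if and only if $z=0$.
   Context: $\operatorname{Arg} z$ denotes the principal argument of $z$, taking values in $(-\pi,\pi]$; the point $z=0$ is regarded as belonging to $S$. The complementary error function $\operatorname{erfc}$ is the entire function $\operatorname{erfc}(z)=1-\operatorname{erf}(z)$ with $\operatorname{erf}(z)=\frac{2}{\sqrt{\pi}}\int_0^z e^{-u^2}\,du$ (integral along any path from $0$ to $z$). *)

theory Defs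
  imports "HOL-Complex_Analysis.Complex_Analysis"
begin

text \<open>Error function: (2/sqrt pi) times the integral of exp(-u^2) from 0 to z,
  taken along the straight segment (the integrand is entire, so any path gives the same value).\<close>
definition cerf :: "complex \<Rightarrow> complex" where
  "cerf z = (2 / of_real (sqrt pi)) * contour_integral (linepath 0 z) (\<lambda>u. exp (- (u ^ 2)))"

definition cerfc :: "complex \<Rightarrow> complex" where
  "cerfc z = 1 - cerf z"

text \<open>The sector S; 0 is included explicitly (Arg 0 = 0 in the library).\<close>
definition sectorS :: "complex set" where
  "sectorS = {z. z = 0 \<or> \<bar>Arg z\<bar> \<ge> 3 * pi / 4}"

end

theory Submission
  imports Defs
begin
definition FF :: "complex \<Rightarrow> complex" where
  "FF z = contour_integral (linepath 0 z) (\<lambda>u. exp (- (u ^ 2)))"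

lemma FF_deriv: "(FF has_field_derivative exp (- (x^2))) (at x)"
  unfolding FF_def
proof (rule triangle_contour_integrals_starlike_primitive[where S=UNIV])
  show "continuous_on UNIV (\<lambda>u::complex. exp (- (u ^ 2)))" by (intro continuous_intros)
  fix b c :: complex
  have "((\<lambda>u. exp (- (u ^ 2))) has_contour_integral 0) (linepath 0 b +++ linepath b c +++ linepath c 0)"
    by (rule Cauchy_theorem_triangle) (intro holomorphic_intros)
  then show "contour_integral (linepath 0 b) (\<lambda>u. exp (- (u ^ 2))) + contour_integral (linepath b c) (\<lambda>u. exp (- (u ^ 2))) +
       contour_integral (linepath c 0) (\<lambda>u. exp (- (u ^ 2))) = 0"
    by (rule has_chain_integral_chain_integral3)
qed auto

lemma FF0: "FF 0 = 0" by (simp add: FF_def)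

definition RR :: "real \<Rightarrow> real" where "RR t = Re (FF (of_real t))"

lemma RR_deriv: "(RR has_real_derivative exp (- (t^2))) (at t)"
proof -
  have "((\<lambda>x. FF (of_real x)) has_vector_derivative exp (- ((of_real t)^2))) (at t)"
    by (rule has_vector_derivative_real_field) (rule FF_deriv)
  then have "((\<lambda>x. Re (FF (of_real x))) has_field_derivative Re (exp (- ((of_real t)^2)))) (at t)"
    by (rule has_field_derivative_Re)
  moreover have "Re (exp (- ((of_real t)^2))) = exp (- (t^2))"
    by (metis Re_complex_of_real exp_of_real of_real_minus of_real_power)
  ultimately show ?thesis unfolding RR_def by simp
qed

lemma RR0: "RR 0 = 0" by (simp add: RR_def FF0)

lemma lemA:
  assumes a: "a > 0"
  shows "RR (- a) < - (1 - exp (- (a^2))) / a"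
proof -
  define M where "M x = - RR (- x) - x * exp (- (x^2))" for x
  define Q where "Q x = - x * RR (- x) - 1 + exp (- (x^2))" for x
  have dM: "(M has_real_derivative 2 * x^2 * exp (- (x^2))) (at x)" for x
    unfolding M_def
    by (rule derivative_eq_intros DERIV_chain2[OF RR_deriv] refl | simp)+
       (simp add: algebra_simps power2_eq_square)
  have dQ: "(Q has_real_derivative M x) (at x)" for x
    unfolding Q_def M_def
    by (rule derivative_eq_intros DERIV_chain2[OF RR_deriv] refl | simp)+
  have cM: "continuous_on S M" for S
    using dM by (meson DERIV_isCont continuous_at_imp_continuous_on)
  have cQ: "continuous_on S Q" for S
    using dQ by (meson DERIV_isCont continuous_at_imp_continuous_on)
  have Mpos: "M x > 0" if "x > 0" for x
  proof -
    have "M 0 < M x"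
      by (rule DERIV_pos_imp_increasing_open[OF that _ cM], rule exI, rule conjI, rule dM, simp)
    then show ?thesis by (simp add: M_def RR0)
  qed
  have "Q 0 < Q a"
    by (rule DERIV_pos_imp_increasing_open[OF a _ cQ], rule exI, rule conjI, rule dQ, rule Mpos, simp)
  then have "0 < - a * RR (- a) - 1 + exp (- (a^2))" by (simp add: Q_def)
  with a show ?thesis by (simp add: field_simps)
qed

lemma gderiv:
  fixes a s :: real
  shows "((\<lambda>s. Re (FF (of_real (-a) + \<i> * of_real s))) has_field_derivative
     (- (exp (s^2 - a^2) * sin (2 * a * s)))) (at s)"
proof -
  define c where "c = (of_real (-a) :: complex)"
  have k: "((\<lambda>w. FF (c + \<i> * w)) has_field_derivative exp (- ((c + \<i> * w)^2)) * \<i>) (at w)" for w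
    by (rule DERIV_chain2[OF FF_deriv]) (rule derivative_eq_intros refl | simp)+
  have "((\<lambda>x. FF (c + \<i> * of_real x)) has_vector_derivative exp (- ((c + \<i> * of_real s)^2)) * \<i>) (at s)"
    by (rule has_vector_derivative_real_field) (rule k)
  then have "((\<lambda>x. Re (FF (c + \<i> * of_real x))) has_field_derivative Re (exp (- ((c + \<i> * of_real s)^2)) * \<i>)) (at s)"
    by (rule has_field_derivative_Re)
  moreover have "Re (exp (- ((c + \<i> * of_real s)^2)) * \<i>) = - (exp (s^2 - a^2) * sin (2 * a * s))"
    by (simp add: c_def power2_eq_square Im_exp algebra_simps)
  ultimately show ?thesis by (simp add: c_def)
qed

lemma lemB:
  fixes a b :: real
  assumes a: "a > 0"
  defines "g \<equiv> (\<lambda>s. Re (FF (of_real (-a) + \<i> * of_real s)))"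
  shows "g b \<le> g 0 + (exp (b^2 - a^2) - exp (- (a^2))) / a"
proof -
  define f where "f s = exp (s^2 - a^2)" for s
  define G where "G s = (1 - cos (2 * a * s)) / (2 * a)" for s
  define P where "P s = (f s - f 0) / a - f s * G s - g s + g 0" for s
  define P' where "P' s = 2 * s * f s * (1 / a - G s)" for s
  have dg: "(g has_real_derivative (- (f s * sin (2 * a * s)))) (at s)" for s
    unfolding g_def f_def by (rule gderiv)
  have dP: "(P has_real_derivative P' s) (at s)" for s
    unfolding P_def f_def G_def
    using a by (auto intro!: derivative_eq_intros dg[unfolded f_def]
        simp: P'_def f_def G_def field_simps power2_eq_square)
  have cP: "continuous_on S P" for S
    using dP by (meson DERIV_isCont continuous_at_imp_continuous_on)
  have Gle: "G s \<le> 1 / a" for s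
  proof -
    have "1 - cos (2 * a * s) \<le> 2" using cos_ge_minus_one[of "2 * a * s"] by linarith
    then have "G s \<le> 2 / (2 * a)" unfolding G_def using a by (intro divide_right_mono) auto
    then show ?thesis by simp
  qed
  have fpos: "f s > 0" for s by (simp add: f_def)
  have "P 0 \<le> P b"
  proof (cases "b \<ge> 0")
    case True
    show ?thesis
      apply (rule DERIV_nonneg_imp_increasing_open[OF True _ cP], rule exI, rule conjI, rule dP)
      using Gle fpos unfolding P'_def
      by (simp add: mult_nonneg_nonneg less_imp_le)
  next
    case False
    then have "b \<le> 0" by simp
    show ?thesis
      apply (rule DERIV_nonpos_imp_decreasing_open[OF \<open>b \<le> 0\<close> _ cP], rule exI, rule conjI, rule dP)
      using Gle fpos unfolding P'_def
      by (simp add: mult_nonpos_nonneg less_imp_le)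
  qed
  moreover have "P 0 = 0" by (simp add: P_def G_def)
  moreover have "f b * G b \<ge> 0"
    using fpos[of b] a cos_le_one[of "2 * a * b"] unfolding G_def by simp
  ultimately show ?thesis unfolding P_def f_def by (simp add: field_simps)
qed

lemma trig_aux:
  fixes t :: real
  assumes "3 * pi / 4 \<le> t" "t \<le> pi"
  shows "cos t < 0 \<and> sin t \<le> - cos t"
proof -
  define u where "u = pi - t"
  have u: "0 \<le> u" "u \<le> pi / 4" using assms by (auto simp: u_def)
  have ct: "cos t = - cos u" "sin t = sin u" by (simp_all add: u_def)
  have "cos u > 0" using u pi_gt_zero by (intro cos_gt_zero_pi) linarith+
  moreover have "sin u \<le> sin (pi/4)" using u by (subst sin_mono_le_eq) auto
  moreover have "cos (pi/4) \<le> cos u" using u by (subst cos_mono_le_eq) auto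
  ultimately show ?thesis using ct by (simp add: cos_45 sin_45)
qed

lemma sector_geom:
  assumes "z \<in> sectorS" "z \<noteq> 0"
  shows "Re z < 0 \<and> \<bar>Im z\<bar> \<le> - Re z"
proof -
  have A: "3 * pi / 4 \<le> \<bar>Arg z\<bar>" using assms by (auto simp: sectorS_def)
  have B: "\<bar>Arg z\<bar> \<le> pi" using Arg_bounded[of z] by auto
  have n: "norm z > 0" using assms by simp
  from trig_aux[OF A B] have T: "cos \<bar>Arg z\<bar> < 0" "sin \<bar>Arg z\<bar> \<le> - cos \<bar>Arg z\<bar>" by auto
  have c: "cos \<bar>Arg z\<bar> = Re z / norm z" using cos_Arg[OF assms(2)] by (simp add: abs_if)
  have s: "\<bar>sin (Arg z)\<bar> = sin \<bar>Arg z\<bar>"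
  proof (cases "Arg z \<ge> 0")
    case True then show ?thesis using B sin_ge_zero[of "Arg z"] by simp
  next
    case False then show ?thesis using B sin_ge_zero[of "- Arg z"] by simp
  qed
  have s2: "\<bar>sin (Arg z)\<bar> = \<bar>Im z\<bar> / norm z" using sin_Arg[OF assms(2)] by simp
  from T c s s2 n show ?thesis by (auto simp: field_simps)
qed

theorem mainTheorem1:
  shows "(\<forall>z\<in>sectorS. Re (cerfc z) \<ge> 1) \<and>
         (\<forall>z\<in>sectorS. Re (cerfc z) = 1 \<longleftrightarrow> z = 0)"
proof -
  have key: "Re (FF z) < 0" if "z \<in> sectorS" "z \<noteq> 0" for z
  proof -
    define a where "a = - Re z"
    define b where "b = Im z"
    from sector_geom[OF that] have a: "a > 0" and ab: "\<bar>b\<bar> \<le> a" by (auto simp: a_def b_def)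
    have z: "z = of_real (-a) + \<i> * of_real b" by (simp add: a_def b_def complex_eq_iff)
    have "b^2 \<le> a^2" using power_mono[OF ab, of 2] by simp
    then have e: "exp (b^2 - a^2) \<le> 1" by simp
    have "Re (FF z) \<le> RR (-a) + (exp (b^2 - a^2) - exp (- (a^2))) / a"
      using lemB[OF a, of b] by (simp add: z RR_def)
    also have "\<dots> \<le> RR (-a) + (1 - exp (- (a^2))) / a"
      using e a by (simp add: divide_right_mono)
    also have "\<dots> < 0" using lemA[OF a] a by (simp add: field_simps)
    finally show ?thesis .
  qed
  have re: "Re (cerfc z) = 1 - 2 / sqrt pi * Re (FF z)" for z
    by (simp add: cerfc_def cerf_def FF_def)
  have sp: "2 / sqrt pi > 0" by simp
  show ?thesis
  proof (intro conjI ballI)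
    fix z assume zS: "z \<in> sectorS"
    show "Re (cerfc z) \<ge> 1"
    proof (cases "z = 0")
      case True then show ?thesis by (simp add: re FF0)
    next
      case False
      with key[OF zS] show ?thesis by (simp add: re divide_nonpos_pos)
    qed
    show "Re (cerfc z) = 1 \<longleftrightarrow> z = 0"
    proof (cases "z = 0")
      case True then show ?thesis by (simp add: re FF0)
    next
      case False
      with key[OF zS] sp show ?thesis by (simp add: re)
    qed
  qed
qed
end
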